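(* Let $r\ge 2$, let $Z$ be a set with $|Z|=m\ge 2r+1$, and let $A\subseteq Z$ with $|A|\in\{r-1,r\}$. Let $\mathcal{B}$ be the $r$-uniform family $\mathcal{B}=\{B\subseteq Z: |B|=r,\ 0<|B\cap A|<|A|\}$. Then $\mathcal{B}$ is non-separable.
   Context: Two families $\mathcal{A}_1,\mathcal{A}_2$ are cross-intersecting if $A_1\cap A_2\neq\emptyset$ for all $A_1\in\mathcal{A}_1$, $A_2\in\mathcal{A}_2$. A family $\mathcal{A}$ is non-separable if for every partition $\mathcal{A}=\mathcal{A}_1\cup\mathcal{A}_2$ (disjoint union) with $(\mathcal{A}_1,\mathcal{A}_2)$ cross-intersecting, we have $\mathcal{A}_1=\emptyset$ or $\mathcal{A}_2=\emptyset$. *)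

theory Defs
  imports Main
begin

definition cross_intersecting :: "'a set set \<Rightarrow> 'a set set \<Rightarrow> bool" where
  "cross_intersecting A1 A2 \<longleftrightarrow> (\<forall>X\<in>A1. \<forall>Y\<in>A2. X \<inter> Y \<noteq> {})"

definition non_separable :: "'a set set \<Rightarrow> bool" where
  "non_separable F \<longleftrightarrow>
     (\<forall>A1 A2. A1 \<union> A2 = F \<and> A1 \<inter> A2 = {} \<and> cross_intersecting A1 A2
        \<longrightarrow> A1 = {} \<or> A2 = {})"

end

theory Submission
  imports Defs
begin

locale ns =
  fixes Z A :: "'a set" and r m :: nat and F1 F2 :: "'a set set"
  assumes r2: "r \<ge> 2" and finZ: "finite Z" and cardZ: "card Z = m" and mr: "m \<ge> 2*r+1"
    and AZ: "A \<subseteq> Z" and cardA: "card A \<le> r"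
    and part: "F1 \<union> F2 = {B. B \<subseteq> Z \<and> card B = r \<and> 0 < card (B \<inter> A) \<and> card (B \<inter> A) < card A}"
    and disj: "F1 \<inter> F2 = {}" and ci: "cross_intersecting F1 F2"
begin

definition fam :: "'a set \<Rightarrow> bool" where
  "fam B \<longleftrightarrow> B \<subseteq> Z \<and> card B = r \<and> 0 < card (B \<inter> A) \<and> card (B \<inter> A) < card A"

definition same :: "'a set \<Rightarrow> 'a set \<Rightarrow> bool" where
  "same B C \<longleftrightarrow> (B \<in> F1 \<longleftrightarrow> C \<in> F1)"

lemma finA: "finite A" using AZ finZ finite_subset by blast

lemma fam_in: "fam B \<longleftrightarrow> B \<in> F1 \<union> F2"
  using part unfolding fam_def by blast

lemma same_trans: "same B C \<Longrightarrow> same C D \<Longrightarrow> same B D"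
  unfolding same_def by blast

lemma disj_same:
  assumes "fam B" "fam C" "B \<inter> C = {}" shows "same B C"
proof -
  have "B \<in> F1 \<union> F2" "C \<in> F1 \<union> F2" using assms fam_in by auto
  thus ?thesis using ci assms(3) unfolding same_def cross_intersecting_def
    by (metis Int_commute UnE)
qed

lemma fam_fin: "fam B \<Longrightarrow> finite B"
  unfolding fam_def using finZ finite_subset by blast

lemma fam_intro:
  assumes "B \<subseteq> Z" "card B = r" "B \<inter> A \<noteq> {}" "A - B \<noteq> {}"
  shows "fam B"
proof -
  have "finite (B \<inter> A)" using finA by simp
  hence "0 < card (B \<inter> A)" using assms(3) by (simp add: card_gt_0_iff)
  moreover have "B \<inter> A \<subset> A" using assms(4) by blast
  hence "card (B \<inter> A) < card A" using finA psubset_card_mono by blast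
  ultimately show ?thesis using assms unfolding fam_def by blast
qed

lemma fam_D: "fam B \<Longrightarrow> B \<inter> A \<noteq> {} \<and> A - B \<noteq> {}"
  unfolding fam_def by (metis Diff_eq_empty_iff card.empty inf.absorb_iff2 inf_commute less_irrefl less_numeral_extra(3))

lemma cn:
  assumes B: "fam B" and D: "fam D" and c: "card (B \<union> D) \<le> r + 1" and a: "A - (B \<union> D) \<noteq> {}"
  shows "same B D"
proof -
  obtain z where z: "z \<in> A - (B \<union> D)" using a by blast
  have sub: "B \<union> D \<subseteq> Z" using B D unfolding fam_def by blast
  have "card (Z - (B \<union> D)) = m - card (B \<union> D)"
    using sub finZ cardZ by (metis card_Diff_subset finite_subset)
  hence c1: "card (Z - (B \<union> D)) \<ge> r" using c mr by linarith
  have "z \<in> Z - (B \<union> D)" using z AZ by blast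
  hence "card (Z - (B \<union> D) - {z}) = card (Z - (B \<union> D)) - 1"
    using finZ by simp
  hence "r - 1 \<le> card (Z - (B \<union> D) - {z})" using c1 by linarith
  then obtain T where T: "T \<subseteq> Z - (B \<union> D) - {z}" "card T = r - 1" "finite T"
    by (rule obtain_subset_with_card_n)
  define C where "C = insert z T"
  have "z \<notin> T" using T by blast
  hence cC: "card C = r" using T r2 unfolding C_def by simp
  obtain b where b: "b \<in> B \<inter> A" using fam_D[OF B] by blast
  have "fam C"
    apply (rule fam_intro)
    using T z AZ cC b unfolding C_def by auto
  have d1: "same B C" using disj_same[OF B \<open>fam C\<close>] T z unfolding C_def by blast
  have d2: "same D C" using disj_same[OF D \<open>fam C\<close>] T z unfolding C_def by blast
  show ?thesis using d1 d2 unfolding same_def by blast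
qed

lemma card_ins: "finite X \<Longrightarrow> card (insert x X) \<le> Suc (card X)"
  by (simp add: card_insert_if)

lemma step:
  assumes B: "fam B" and B': "fam B'" and ne: "B \<noteq> B'"
  shows "(\<exists>x y. x\<in>B'-B \<and> y\<in>B-B' \<and> fam (insert x (B-{y})) \<and> A - insert x B \<noteq> {})
       \<or> (\<exists>S y z. B = insert y S \<and> B' = insert z S \<and> y\<notin>S \<and> z\<notin>S \<and> y\<in>A \<and> z\<in>A \<and> y\<noteq>z \<and> A - B = {z})"
proof -
  have fin: "finite B" "finite B'" using B B' fam_fin by auto
  have cr: "card B = r" "card B' = r" using B B' unfolding fam_def by auto
  have eqc: "card (B - B') = card (B' - B)"
    using fin cr by (simp add: card_Diff_subset_Int Int_commute)
  have nB: "B - B' \<noteq> {}"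
  proof
    assume "B - B' = {}"
    hence "B \<subseteq> B'" by blast
    thus False using card_subset_eq[OF fin(2)] cr ne by auto
  qed
  hence "card (B - B') > 0" using fin by (simp add: card_gt_0_iff)
  hence nB': "B' - B \<noteq> {}" using eqc by (metis card.empty less_irrefl)
  have aux: "fam (insert x (B-{y}))" if x: "x\<in>B'-B" and y: "y\<in>B-B'"
    and i: "insert x (B-{y}) \<inter> A \<noteq> {}" and d: "A - insert x B \<noteq> {}" for x y
  proof (rule fam_intro)
    show "insert x (B - {y}) \<subseteq> Z" using x y B B' unfolding fam_def by blast
    have "card (B - {y}) = r - 1" using y cr fin by simp
    moreover have "x \<notin> B - {y}" using x by blast
    ultimately show "card (insert x (B - {y})) = r" using fin r2 by simp
    show "insert x (B - {y}) \<inter> A \<noteq> {}" by fact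
    show "A - insert x (B - {y}) \<noteq> {}" using d by blast
  qed
  show ?thesis
  proof (cases "\<exists>x\<in>B'-B. A - insert x B \<noteq> {}")
    case True
    then obtain x where x: "x \<in> B'-B" "A - insert x B \<noteq> {}" by blast
    show ?thesis
    proof (cases "x \<in> A")
      case True
      obtain y where "y \<in> B - B'" using nB by blast
      thus ?thesis using aux[of x y] x True by blast
    next
      case False
      have "\<exists>y\<in>B-B'. (B\<inter>A) - {y} \<noteq> {}"
      proof (rule ccontr)
        assume "\<not> ?thesis"
        hence h: "\<forall>y\<in>B-B'. B\<inter>A \<subseteq> {y}" by blast
        obtain w where w: "w \<in> B\<inter>A" using fam_D[OF B] by blast
        have BB: "B - B' = {w}"
        proof -
          have e: "\<forall>y\<in>B-B'. y = w" using h w by (intro ballI) (use h w in force)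
          obtain y0 where y0: "y0 \<in> B - B'" using nB by blast
          have "y0 = w" using e y0 by blast
          show ?thesis
          proof
            show "B - B' \<subseteq> {w}" using e by blast
            show "{w} \<subseteq> B - B'" using y0 \<open>y0 = w\<close> by blast
          qed
        qed
        hence "card (B' - B) = 1" using eqc by simp
        then obtain u where "B' - B = {u}" using card_1_singletonE by blast
        hence u: "B' - B = {x}" using x by auto
        obtain v where v: "v \<in> B' \<inter> A" using fam_D[OF B'] by blast
        show False
        proof (cases "v \<in> B")
          case True
          hence "v \<in> B\<inter>A" using v by blast
          hence "v = w" using h BB by blast
          thus False using BB v by blast
        next
          case False
          hence "v = x" using u v by blast
          thus False using v \<open>x \<notin> A\<close> by blast
        qed
      qed
      then obtain y where y: "y \<in> B-B'" "(B\<inter>A) - {y} \<noteq> {}" by blast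
      have "insert x (B-{y}) \<inter> A \<noteq> {}" using y(2) by blast
      thus ?thesis using aux[of x y] x y by blast
    qed
  next
    case False
    hence h: "\<forall>x\<in>B'-B. A - insert x B = {}" by blast
    obtain z where z: "z \<in> A - B" using fam_D[OF B] by blast
    have e: "\<forall>x\<in>B'-B. x = z" using h z by auto
    obtain x0 where x0: "x0 \<in> B' - B" using nB' by blast
    have "x0 = z" using e x0 by auto
    have BB': "B' - B = {z}"
    proof
      show "B' - B \<subseteq> {z}" using e by auto
      show "{z} \<subseteq> B' - B" using x0 \<open>x0 = z\<close> by auto
    qed
    hence "card (B - B') = 1" using eqc by simp
    then obtain y where y: "B - B' = {y}" using card_1_singletonE by blast
    have AB: "A - B = {z}" using h BB' z by auto
    define S where "S = B \<inter> B'"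
    have e1: "B = insert y S" using y unfolding S_def by blast
    have e2: "B' = insert z S" using BB' unfolding S_def by blast
    have yA: "y \<in> A"
    proof -
      obtain v where v: "v \<in> A - B'" using fam_D[OF B'] by blast
      show ?thesis
      proof (cases "v \<in> B")
        case True thus ?thesis using v y by auto
      next
        case False thus ?thesis using v AB BB' by blast
      qed
    qed
    have "y \<noteq> z" using y BB' by blast
    moreover have "y \<notin> S" "z \<notin> S" using y BB' unfolding S_def by auto
    ultimately show ?thesis using e1 e2 yA z AB by blast
  qed
qed

lemma bad:
  assumes B: "fam B" and B': "fam B'" and e1: "B = insert y S" and e2: "B' = insert z S"
    and yS: "y\<notin>S" and zS: "z\<notin>S" and yA: "y\<in>A" and zA: "z\<in>A" and yz: "y\<noteq>z"
    and AB: "A - B = {z}" and A3: "card A \<ge> 3"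
  shows "same B B'"
proof -
  have fin: "finite B" "finite B'" using B B' fam_fin by auto
  have cr: "card B = r" "card B' = r" using B B' unfolding fam_def by auto
  have finS: "finite S" using fin e1 by simp
  have cS: "card S = r - 1" using cr e1 yS finS by simp
  have SZ: "S \<subseteq> Z" using B e1 unfolding fam_def by blast
  have yZ: "y \<in> Z" "z \<in> Z" using yA zA AZ by auto
  have Asub: "A \<subseteq> insert y (insert z S)" using AB e1 by blast
  obtain s where s: "s \<in> A \<inter> S"
  proof (rule ccontr)
    assume "\<not> thesis"
    hence "A \<subseteq> {y, z}" using Asub that by blast
    hence "card A \<le> card {y,z}" by (simp add: card_mono)
    also have "\<dots> \<le> 2" by (simp add: card_insert_if)
    finally show False using A3 by simp
  qed
  have "card (A \<union> S) \<le> card A + card S" by (rule card_Un_le)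
  hence "card (A \<union> S) < m" using cardA cS mr r2 by linarith
  hence "card (A \<union> S) < card Z" using cardZ by simp
  hence "\<not> Z \<subseteq> A \<union> S" using finA finS card_mono
    by (metis finite_UnI leD)
  then obtain w where w: "w \<in> Z" "w \<notin> A" "w \<notin> S" by blast
  have wyz: "w \<noteq> y" "w \<noteq> z" "w \<noteq> s" using w yA zA s by auto
  define B1 where "B1 = insert y (insert w (S - {s}))"
  define B2 where "B2 = insert z (insert w (S - {s}))"
  have cSs: "card (S - {s}) = r - 2" using s cS finS by simp
  have cB1: "card B1 = r" using cSs wyz yS zS w finS r2 unfolding B1_def by auto
  have cB2: "card B2 = r" using cSs wyz yS zS w finS r2 unfolding B2_def by auto
  have f1: "fam B1"
    apply (rule fam_intro) using SZ w yZ cB1 yA zA yz zS unfolding B1_def by auto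
  have f2: "fam B2"
    apply (rule fam_intro) using SZ w yZ cB2 yA zA yz yS unfolding B2_def by auto
  have s1: "same B B1"
  proof (rule cn[OF B f1])
    have "B \<union> B1 = insert w B" unfolding B1_def e1 by blast
    thus "card (B \<union> B1) \<le> r + 1" using card_ins[OF fin(1)] cr by simp
    show "A - (B \<union> B1) \<noteq> {}" using zA zS yz wyz unfolding B1_def e1 by blast
  qed
  have s2: "same B1 B2"
  proof (rule cn[OF f1 f2])
    have "B1 \<union> B2 = insert z B1" unfolding B1_def B2_def by blast
    moreover have "finite B1" using f1 fam_fin by blast
    ultimately show "card (B1 \<union> B2) \<le> r + 1" using card_ins[of B1 z] cB1 by simp
    show "A - (B1 \<union> B2) \<noteq> {}" using s wyz yS zS unfolding B1_def B2_def by blast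
  qed
  have s3: "same B2 B'"
  proof (rule cn[OF f2 B'])
    have "B2 \<union> B' = insert w B'" unfolding B2_def e2 by blast
    thus "card (B2 \<union> B') \<le> r + 1" using card_ins[OF fin(2)] cr by simp
    show "A - (B2 \<union> B') \<noteq> {}" using yA yS yz wyz unfolding B2_def e2 by blast
  qed
  show ?thesis using s1 s2 s3 same_trans by blast
qed

lemma main:
  "fam B \<Longrightarrow> fam B' \<Longrightarrow> card (B - B') = k \<Longrightarrow> card A \<ge> 3 \<or> A \<inter> B = A \<inter> B' \<Longrightarrow> same B B'"
proof (induction k arbitrary: B)
  case 0
  have fin: "finite B" "finite B'" using 0 fam_fin by auto
  hence "B \<subseteq> B'" using 0 by auto
  hence "B = B'" using card_subset_eq[OF fin(2)] 0 unfolding fam_def by auto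
  thus ?case unfolding same_def by simp
next
  case (Suc k)
  have fin: "finite B" "finite B'" using Suc fam_fin by auto
  have cr: "card B = r" using Suc unfolding fam_def by auto
  have ne: "B \<noteq> B'" using Suc by auto
  from step[OF Suc(2) Suc(3) ne] show ?case
  proof
    assume "\<exists>x y. x\<in>B'-B \<and> y\<in>B-B' \<and> fam (insert x (B-{y})) \<and> A - insert x B \<noteq> {}"
    then obtain x y where x: "x\<in>B'-B" and y: "y\<in>B-B'" and f: "fam (insert x (B-{y}))"
      and d: "A - insert x B \<noteq> {}" by blast
    define B'' where "B'' = insert x (B-{y})"
    have s1: "same B B''"
    proof (rule cn[OF Suc(2) f[folded B''_def]])
      have "B \<union> B'' = insert x B" using y unfolding B''_def by blast
      thus "card (B \<union> B'') \<le> r + 1" using card_ins[OF fin(1)] cr by simp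
      show "A - (B \<union> B'') \<noteq> {}" using d unfolding B''_def by blast
    qed
    have "B'' - B' = (B - B') - {y}" using x unfolding B''_def by blast
    hence c: "card (B'' - B') = k" using y Suc(4) fin by simp
    have h: "card A \<ge> 3 \<or> A \<inter> B'' = A \<inter> B'"
      using Suc(5) x y unfolding B''_def by blast
    have s2: "same B'' B'" using Suc.IH[OF f[folded B''_def] Suc(3) c h] .
    show ?thesis using s1 s2 same_trans by blast
  next
    assume "\<exists>S y z. B = insert y S \<and> B' = insert z S \<and> y\<notin>S \<and> z\<notin>S \<and> y\<in>A \<and> z\<in>A \<and> y\<noteq>z \<and> A - B = {z}"
    then obtain S y z where h: "B = insert y S" "B' = insert z S" "y\<notin>S" "z\<notin>S" "y\<in>A" "z\<in>A" "y\<noteq>z" "A - B = {z}"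
      by blast
    show ?thesis
    proof (cases "card A \<ge> 3")
      case True thus ?thesis using bad[OF Suc(2) Suc(3) h] by blast
    next
      case False
      hence "A \<inter> B = A \<inter> B'" using Suc(5) by blast
      thus ?thesis using h by blast
    qed
  qed
qed

lemma all_same:
  assumes B: "fam B" and B': "fam B'" shows "same B B'"
proof (cases "card A \<ge> 3")
  case True thus ?thesis using main[OF B B'] by blast
next
  case False
  have c1: "0 < card (B \<inter> A)" "card (B \<inter> A) < card A" using B unfolding fam_def by auto
  have c2: "0 < card (B' \<inter> A)" "card (B' \<inter> A) < card A" using B' unfolding fam_def by auto
  have cA: "card A = 2" using False c1 by linarith
  have "card (B \<inter> A) = 1" using c1 cA by linarith
  then obtain p where p: "B \<inter> A = {p}" using card_1_singletonE by blast
  have "card (B' \<inter> A) = 1" using c2 cA by linarith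
  then obtain q where q: "B' \<inter> A = {q}" using card_1_singletonE by blast
  show ?thesis
  proof (cases "p = q")
    case True
    hence "A \<inter> B = A \<inter> B'" using p q by blast
    thus ?thesis using main[OF B B'] by blast
  next
    case False
    have "{p,q} \<subseteq> A" using p q by blast
    moreover have "card {p,q} = card A" using False cA by simp
    ultimately have Apq: "A = {p,q}" using card_subset_eq[OF finA] by blast
    have sub: "B' \<subseteq> Z" using B' unfolding fam_def by blast
    have cB': "card B' = r" using B' unfolding fam_def by blast
    have pZ: "p \<in> Z" "p \<notin> B'" using p q AZ False by auto
    have "card (Z - B') = m - r" using sub finZ cardZ cB' by (metis card_Diff_subset finite_subset)
    moreover have "card (Z - B' - {p}) = card (Z - B') - 1" using pZ finZ by simp
    ultimately have "r - 1 \<le> card (Z - B' - {p})" using mr by linarith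
    then obtain T where T: "T \<subseteq> Z - B' - {p}" "card T = r - 1" "finite T"
      by (rule obtain_subset_with_card_n)
    define Y where "Y = insert p T"
    have "p \<notin> T" using T by blast
    hence cY: "card Y = r" using T r2 unfolding Y_def by simp
    have qB': "q \<in> B'" using q by blast
    have fY: "fam Y"
      apply (rule fam_intro) using T pZ cY Apq qB' False p unfolding Y_def by auto
    have "A \<inter> Y = {p}" using T Apq qB' unfolding Y_def by blast
    hence "A \<inter> B = A \<inter> Y" using p by blast
    hence s1: "same B Y" using main[OF B fY] by blast
    have s2: "same Y B'" using disj_same[OF fY B'] T pZ unfolding Y_def by blast
    show ?thesis using s1 s2 same_trans by blast
  qed
qed

end

theorem proposition3p3:
  fixes Z A :: "'a set" and r m :: nat
  assumes "r \<ge> 2"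
    and "finite Z" and "card Z = m" and "m \<ge> 2 * r + 1"
    and "A \<subseteq> Z" and "card A = r - 1 \<or> card A = r"
  shows "non_separable {B. B \<subseteq> Z \<and> card B = r \<and> 0 < card (B \<inter> A) \<and> card (B \<inter> A) < card A}"
  unfolding non_separable_def
proof (intro allI impI)
  fix A1 A2
  assume h: "A1 \<union> A2 = {B. B \<subseteq> Z \<and> card B = r \<and> 0 < card (B \<inter> A) \<and> card (B \<inter> A) < card A} \<and>
       A1 \<inter> A2 = {} \<and> cross_intersecting A1 A2"
  interpret ns Z A r m A1 A2
    using assms h by unfold_locales auto
  show "A1 = {} \<or> A2 = {}"
  proof (rule ccontr)
    assume "\<not> (A1 = {} \<or> A2 = {})"
    then obtain B1 B2 where b: "B1 \<in> A1" "B2 \<in> A2" by blast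
    hence "fam B1" "fam B2" using fam_in by auto
    hence "same B1 B2" by (rule all_same)
    hence "B2 \<in> A1" using b unfolding same_def by blast
    thus False using b disj by blast
  qed
qed

end
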